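(* Let $({\mathcal B};{\mathcal V},{\mathcal H};{\mathcal P})$ be a slim (discrete) double groupoid satisfying the filling condition. On ${\mathcal V}\times_{b,l}{\mathcal H}=\{(v,h)\in{\mathcal V}\times{\mathcal H}: b(v)=l(h)\}$ define $(v_1,h_1)\sim_{\mathcal B}(v_2,h_2)$ iff $r(h_1)=r(h_2)$, $t(v_1)=t(v_2)$ and $v_1h_1h_2^{-1}v_2^{-1}\in J_\circledast({\mathcal B})$. Then $\sim_{\mathcal B}$ is an equivalence relation, and the map $$\phi:({\mathcal V}\times_{b,l}{\mathcal H})/\!\sim_{\mathcal B}\ \to{\mathcal D}({\mathcal B}),\qquad [v,h]\mapsto j(v)i(h)$$ is well defined and is a bijection (of quivers over ${\mathcal P}$, i.e. compatible with the maps to ${\mathcal P}$ given by $[v,h]\mapsto t(v)$, $[v,h]\mapsto r(h)$ and the source/target of ${\mathcal D}({\mathcal B})$).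
   Context: A (discrete) double groupoid $({\mathcal B};{\mathcal V},{\mathcal H};{\mathcal P})$: ${\mathcal V}$ and ${\mathcal H}$ are groupoids over ${\mathcal P}$; for ${\mathcal V}$ source/end are $t,b$, for ${\mathcal H}$ source/end are $l,r$. ${\mathcal B}$ is a set of "boxes" $A$ with sides $t(A),b(A)\in{\mathcal H}$, $l(A),r(A)\in{\mathcal V}$ (with $l(t(A))=t(l(A))$, $r(t(A))=t(r(A))$, $l(b(A))=b(l(A))$, $r(b(A))=b(r(A))$), carrying a horizontal groupoid structure over ${\mathcal V}$ (source $l$, target $r$; product $AB$ when $r(A)=l(B)$, with $t(AB)=t(A)t(B)$, $b(AB)=b(A)b(B)$) and a vertical groupoid structure over ${\mathcal H}$ (source $t$, target $b$; product when $b(A)=t(B)$, with left and right sides multiplied), the structure maps of each being morphisms for the other. It is slim if each box is determined by its four sides. It satisfies the filling condition if for every $x\in{\mathcal H}$, $f\in{\mathcal V}$ with $l(x)=t(f)$ there is a box $A$ with $t(A)=x$, $l(A)=f$; by symmetry of the axioms (using inverses) any "corner" of two compatible sides can be completed to a box. ${\mathcal V}\circledast{\mathcal H}$ is the free product groupoid over ${\mathcal P}$ of ${\mathcal V}$ and ${\mathcal H}$ (generated by ${\mathcal V}$ and ${\mathcal H}$ glued along identities, with words of composable arrows). For a box $A$ with top $x$, right $g$, bottom $y$, left $h$, set $[A]=xgy^{-1}h^{-1}\in{\mathcal V}\circledast{\mathcal H}$; $J_\circledast({\mathcal B})$ is the subgroupoid generated by all $[A]$, a normal group bundle. The diagonal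 groupoid is ${\mathcal D}({\mathcal B})=({\mathcal V}\circledast{\mathcal H})/J_\circledast({\mathcal B})$, and $i:{\mathcal H}\to{\mathcal D}({\mathcal B})$, $j:{\mathcal V}\to{\mathcal D}({\mathcal B})$ are the compositions of the natural inclusions with the projection. *)

theory Defs
  imports Main
begin

section \<open>Groupoids (composition written diagrammatically: g_comp G f g = "f then g")\<close>

record ('o,'a) grpd =
  g_arr  :: "'a set"
  g_src  :: "'a \<Rightarrow> 'o"
  g_tgt  :: "'a \<Rightarrow> 'o"
  g_id   :: "'o \<Rightarrow> 'a"
  g_comp :: "'a \<Rightarrow> 'a \<Rightarrow> 'a"
  g_inv  :: "'a \<Rightarrow> 'a"

definition groupoid :: "'o set \<Rightarrow> ('o,'a) grpd \<Rightarrow> bool" where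
  "groupoid Ob G \<longleftrightarrow>
    (\<forall>f\<in>g_arr G. g_src G f \<in> Ob \<and> g_tgt G f \<in> Ob) \<and>
    (\<forall>x\<in>Ob. g_id G x \<in> g_arr G \<and> g_src G (g_id G x) = x \<and> g_tgt G (g_id G x) = x) \<and>
    (\<forall>f\<in>g_arr G. \<forall>g\<in>g_arr G. g_tgt G f = g_src G g \<longrightarrow>
        g_comp G f g \<in> g_arr G \<and> g_src G (g_comp G f g) = g_src G f \<and>
        g_tgt G (g_comp G f g) = g_tgt G g) \<and>
    (\<forall>f\<in>g_arr G. \<forall>g\<in>g_arr G. \<forall>h\<in>g_arr G.
        g_tgt G f = g_src G g \<longrightarrow> g_tgt G g = g_src G h \<longrightarrow>
        g_comp G (g_comp G f g) h = g_comp G f (g_comp G g h)) \<and>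
    (\<forall>f\<in>g_arr G. g_comp G (g_id G (g_src G f)) f = f \<and> g_comp G f (g_id G (g_tgt G f)) = f) \<and>
    (\<forall>f\<in>g_arr G. g_inv G f \<in> g_arr G \<and> g_src G (g_inv G f) = g_tgt G f \<and>
        g_tgt G (g_inv G f) = g_src G f \<and>
        g_comp G f (g_inv G f) = g_id G (g_src G f) \<and>
        g_comp G (g_inv G f) f = g_id G (g_tgt G f))"

text \<open>dg_V: vertical groupoid over the objects (source t, target b);
  dg_H: horizontal groupoid over the objects (source l, target r);
  dg_BH: horizontal groupoid structure on boxes over the vertical arrows (source l, target r);
  dg_BV: vertical groupoid structure on boxes over the horizontal arrows (source t, target b).\<close>

record ('p,'v,'h,'b) dgrpd =
  dg_obj :: "'p set"
  dg_V   :: "('p,'v) grpd"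
  dg_H   :: "('p,'h) grpd"
  dg_BH  :: "('v,'b) grpd"
  dg_BV  :: "('h,'b) grpd"

abbreviation boxes where "boxes D \<equiv> g_arr (dg_BH D)"
abbreviation btop  where "btop D \<equiv> g_src (dg_BV D)"
abbreviation bbot  where "bbot D \<equiv> g_tgt (dg_BV D)"
abbreviation blft  where "blft D \<equiv> g_src (dg_BH D)"
abbreviation brgt  where "brgt D \<equiv> g_tgt (dg_BH D)"
abbreviation vt where "vt D \<equiv> g_src (dg_V D)"
abbreviation vb where "vb D \<equiv> g_tgt (dg_V D)"
abbreviation hl where "hl D \<equiv> g_src (dg_H D)"
abbreviation hr where "hr D \<equiv> g_tgt (dg_H D)"

definition double_groupoid :: "('p,'v,'h,'b) dgrpd \<Rightarrow> bool" where
  "double_groupoid D \<longleftrightarrow>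
    groupoid (dg_obj D) (dg_V D) \<and> groupoid (dg_obj D) (dg_H D) \<and>
    groupoid (g_arr (dg_V D)) (dg_BH D) \<and> groupoid (g_arr (dg_H D)) (dg_BV D) \<and>
    g_arr (dg_BV D) = g_arr (dg_BH D) \<and>
    \<comment> \<open>corners\<close>
    (\<forall>A\<in>boxes D. hl D (btop D A) = vt D (blft D A) \<and> hr D (btop D A) = vt D (brgt D A) \<and>
                  hl D (bbot D A) = vb D (blft D A) \<and> hr D (bbot D A) = vb D (brgt D A)) \<and>
    \<comment> \<open>t, b are morphisms for the horizontal structure\<close>
    (\<forall>A\<in>boxes D. \<forall>B\<in>boxes D. brgt D A = blft D B \<longrightarrow>
        btop D (g_comp (dg_BH D) A B) = g_comp (dg_H D) (btop D A) (btop D B) \<and>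
        bbot D (g_comp (dg_BH D) A B) = g_comp (dg_H D) (bbot D A) (bbot D B)) \<and>
    (\<forall>f\<in>g_arr (dg_V D). btop D (g_id (dg_BH D) f) = g_id (dg_H D) (vt D f) \<and>
                        bbot D (g_id (dg_BH D) f) = g_id (dg_H D) (vb D f)) \<and>
    \<comment> \<open>l, r are morphisms for the vertical structure\<close>
    (\<forall>A\<in>boxes D. \<forall>B\<in>boxes D. bbot D A = btop D B \<longrightarrow>
        blft D (g_comp (dg_BV D) A B) = g_comp (dg_V D) (blft D A) (blft D B) \<and>
        brgt D (g_comp (dg_BV D) A B) = g_comp (dg_V D) (brgt D A) (brgt D B)) \<and>
    (\<forall>x\<in>g_arr (dg_H D). blft D (g_id (dg_BV D) x) = g_id (dg_V D) (hl D x) \<and>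
                        brgt D (g_id (dg_BV D) x) = g_id (dg_V D) (hr D x)) \<and>
    \<comment> \<open>horizontal composition and identities are morphisms for the vertical structure\<close>
    (\<forall>A\<in>boxes D. \<forall>B\<in>boxes D. \<forall>C\<in>boxes D. \<forall>E\<in>boxes D.
        brgt D A = blft D B \<longrightarrow> brgt D C = blft D E \<longrightarrow>
        bbot D A = btop D C \<longrightarrow> bbot D B = btop D E \<longrightarrow>
        g_comp (dg_BV D) (g_comp (dg_BH D) A B) (g_comp (dg_BH D) C E) =
        g_comp (dg_BH D) (g_comp (dg_BV D) A C) (g_comp (dg_BV D) B E)) \<and>
    (\<forall>f\<in>g_arr (dg_V D). \<forall>g\<in>g_arr (dg_V D). vb D f = vt D g \<longrightarrow>
        g_id (dg_BH D) (g_comp (dg_V D) f g) = g_comp (dg_BV D) (g_id (dg_BH D) f) (g_id (dg_BH D) g)) \<and>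
    (\<forall>x\<in>g_arr (dg_H D). \<forall>y\<in>g_arr (dg_H D). hr D x = hl D y \<longrightarrow>
        g_id (dg_BV D) (g_comp (dg_H D) x y) = g_comp (dg_BH D) (g_id (dg_BV D) x) (g_id (dg_BV D) y)) \<and>
    (\<forall>p\<in>dg_obj D. g_id (dg_BH D) (g_id (dg_V D) p) = g_id (dg_BV D) (g_id (dg_H D) p))"

definition slim :: "('p,'v,'h,'b) dgrpd \<Rightarrow> bool" where
  "slim D \<longleftrightarrow> (\<forall>A\<in>boxes D. \<forall>B\<in>boxes D.
     btop D A = btop D B \<and> bbot D A = bbot D B \<and> blft D A = blft D B \<and> brgt D A = brgt D B \<longrightarrow> A = B)"

definition filling :: "('p,'v,'h,'b) dgrpd \<Rightarrow> bool" where
  "filling D \<longleftrightarrow> (\<forall>x\<in>g_arr (dg_H D). \<forall>f\<in>g_arr (dg_V D). hl D x = vt D f \<longrightarrow>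
     (\<exists>A\<in>boxes D. btop D A = x \<and> blft D A = f))"

section \<open>The free product groupoid V \<circledast> H: words of composable arrows modulo merging and
  deleting identities (identities of V and H glued)\<close>

definition lok :: "('p,'v,'h,'b) dgrpd \<Rightarrow> 'v + 'h \<Rightarrow> bool" where
  "lok D a = (case a of Inl v \<Rightarrow> v \<in> g_arr (dg_V D) | Inr h \<Rightarrow> h \<in> g_arr (dg_H D))"
definition lsrc :: "('p,'v,'h,'b) dgrpd \<Rightarrow> 'v + 'h \<Rightarrow> 'p" where
  "lsrc D a = (case a of Inl v \<Rightarrow> vt D v | Inr h \<Rightarrow> hl D h)"
definition ltgt :: "('p,'v,'h,'b) dgrpd \<Rightarrow> 'v + 'h \<Rightarrow> 'p" where
  "ltgt D a = (case a of Inl v \<Rightarrow> vb D v | Inr h \<Rightarrow> hr D h)"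
definition linv :: "('p,'v,'h,'b) dgrpd \<Rightarrow> 'v + 'h \<Rightarrow> 'v + 'h" where
  "linv D a = (case a of Inl v \<Rightarrow> Inl (g_inv (dg_V D) v) | Inr h \<Rightarrow> Inr (g_inv (dg_H D) h))"

primrec walk :: "('p,'v,'h,'b) dgrpd \<Rightarrow> 'p \<Rightarrow> ('v + 'h) list \<Rightarrow> 'p \<Rightarrow> bool" where
  "walk D p [] q = (p = q \<and> p \<in> dg_obj D)"
| "walk D p (a # w) q = (lok D a \<and> lsrc D a = p \<and> walk D (ltgt D a) w q)"

type_synonym ('p,'v,'h) path = "'p \<times> ('v + 'h) list \<times> 'p"

definition paths :: "('p,'v,'h,'b) dgrpd \<Rightarrow> ('p,'v,'h) path set" where
  "paths D = {(p, w, q). walk D p w q}"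

definition pconc :: "('p,'v,'h) path \<Rightarrow> ('p,'v,'h) path \<Rightarrow> ('p,'v,'h) path" where
  "pconc \<pi> \<sigma> = (fst \<pi>, fst (snd \<pi>) @ fst (snd \<sigma>), snd (snd \<sigma>))"

definition pinv :: "('p,'v,'h,'b) dgrpd \<Rightarrow> ('p,'v,'h) path \<Rightarrow> ('p,'v,'h) path" where
  "pinv D \<pi> = (snd (snd \<pi>), rev (map (linv D) (fst (snd \<pi>))), fst \<pi>)"

inductive fp_step :: "('p,'v,'h,'b) dgrpd \<Rightarrow> ('v + 'h) list \<Rightarrow> ('v + 'h) list \<Rightarrow> bool"
  for D where
  mergeV: "\<lbrakk>f \<in> g_arr (dg_V D); g \<in> g_arr (dg_V D); vb D f = vt D g\<rbrakk> \<Longrightarrow>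
     fp_step D (u @ Inl f # Inl g # w) (u @ Inl (g_comp (dg_V D) f g) # w)"
| mergeH: "\<lbrakk>f \<in> g_arr (dg_H D); g \<in> g_arr (dg_H D); hr D f = hl D g\<rbrakk> \<Longrightarrow>
     fp_step D (u @ Inr f # Inr g # w) (u @ Inr (g_comp (dg_H D) f g) # w)"
| idV: "p \<in> dg_obj D \<Longrightarrow> fp_step D (u @ Inl (g_id (dg_V D) p) # w) (u @ w)"
| idH: "p \<in> dg_obj D \<Longrightarrow> fp_step D (u @ Inr (g_id (dg_H D) p) # w) (u @ w)"

definition fp_rel :: "('p,'v,'h,'b) dgrpd \<Rightarrow> (('p,'v,'h) path \<times> ('p,'v,'h) path) set" where
  "fp_rel D = {(\<pi>, \<sigma>). \<pi> \<in> paths D \<and> \<sigma> \<in> paths D \<and> fst \<pi> = fst \<sigma> \<and>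
                       snd (snd \<pi>) = snd (snd \<sigma>) \<and> fp_step D (fst (snd \<pi>)) (fst (snd \<sigma>))}"

definition fp_eq :: "('p,'v,'h,'b) dgrpd \<Rightarrow> (('p,'v,'h) path \<times> ('p,'v,'h) path) set" where
  "fp_eq D = (fp_rel D \<union> (fp_rel D)\<inverse>)\<^sup>* \<inter> (paths D \<times> paths D)"

definition fpcls :: "('p,'v,'h,'b) dgrpd \<Rightarrow> ('p,'v,'h) path \<Rightarrow> ('p,'v,'h) path set" where
  "fpcls D \<pi> = fp_eq D `` {\<pi>}"

definition FP :: "('p,'v,'h,'b) dgrpd \<Rightarrow> ('p, ('p,'v,'h) path set) grpd" where
  "FP D = \<lparr> g_arr = paths D // fp_eq D,
            g_src = (\<lambda>X. fst (SOME \<pi>. \<pi> \<in> X)),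
            g_tgt = (\<lambda>X. snd (snd (SOME \<pi>. \<pi> \<in> X))),
            g_id = (\<lambda>p. fpcls D (p, [], p)),
            g_comp = (\<lambda>X Y. fpcls D (pconc (SOME \<pi>. \<pi> \<in> X) (SOME \<sigma>. \<sigma> \<in> Y))),
            g_inv = (\<lambda>X. fpcls D (pinv D (SOME \<pi>. \<pi> \<in> X))) \<rparr>"

definition box_word :: "('p,'v,'h,'b) dgrpd \<Rightarrow> 'b \<Rightarrow> ('p,'v,'h) path set" where
  "box_word D A = fpcls D (hl D (btop D A),
     [Inr (btop D A), Inl (brgt D A), Inr (g_inv (dg_H D) (bbot D A)), Inl (g_inv (dg_V D) (blft D A))],
     hl D (btop D A))"

inductive_set Jfp :: "('p,'v,'h,'b) dgrpd \<Rightarrow> ('p,'v,'h) path set set" for D where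
  gen: "A \<in> boxes D \<Longrightarrow> box_word D A \<in> Jfp D"
| comp: "\<lbrakk>X \<in> Jfp D; Y \<in> Jfp D; g_tgt (FP D) X = g_src (FP D) Y\<rbrakk> \<Longrightarrow> g_comp (FP D) X Y \<in> Jfp D"
| inv: "X \<in> Jfp D \<Longrightarrow> g_inv (FP D) X \<in> Jfp D"

definition Deq :: "('p,'v,'h,'b) dgrpd \<Rightarrow> (('p,'v,'h) path set \<times> ('p,'v,'h) path set) set" where
  "Deq D = {(X, Y). X \<in> g_arr (FP D) \<and> Y \<in> g_arr (FP D) \<and>
      g_src (FP D) X = g_src (FP D) Y \<and> g_tgt (FP D) X = g_tgt (FP D) Y \<and>
      g_comp (FP D) X (g_inv (FP D) Y) \<in> Jfp D}"

definition Dg :: "('p,'v,'h,'b) dgrpd \<Rightarrow> ('p, ('p,'v,'h) path set set) grpd" where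
  "Dg D = \<lparr> g_arr = g_arr (FP D) // Deq D,
            g_src = (\<lambda>Z. g_src (FP D) (SOME X. X \<in> Z)),
            g_tgt = (\<lambda>Z. g_tgt (FP D) (SOME X. X \<in> Z)),
            g_id = (\<lambda>p. Deq D `` {g_id (FP D) p}),
            g_comp = (\<lambda>Z W. Deq D `` {g_comp (FP D) (SOME X. X \<in> Z) (SOME Y. Y \<in> W)}),
            g_inv = (\<lambda>Z. Deq D `` {g_inv (FP D) (SOME X. X \<in> Z)}) \<rparr>"

definition jD :: "('p,'v,'h,'b) dgrpd \<Rightarrow> 'v \<Rightarrow> ('p,'v,'h) path set set" where
  "jD D v = Deq D `` {fpcls D (vt D v, [Inl v], vb D v)}"

definition iD :: "('p,'v,'h,'b) dgrpd \<Rightarrow> 'h \<Rightarrow> ('p,'v,'h) path set set" where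
  "iD D h = Deq D `` {fpcls D (hl D h, [Inr h], hr D h)}"

definition VxH :: "('p,'v,'h,'b) dgrpd \<Rightarrow> ('v \<times> 'h) set" where
  "VxH D = {(v, h). v \<in> g_arr (dg_V D) \<and> h \<in> g_arr (dg_H D) \<and> vb D v = hl D h}"

definition simB :: "('p,'v,'h,'b) dgrpd \<Rightarrow> (('v \<times> 'h) \<times> ('v \<times> 'h)) set" where
  "simB D = {((v1, h1), (v2, h2)). (v1, h1) \<in> VxH D \<and> (v2, h2) \<in> VxH D \<and>
      hr D h1 = hr D h2 \<and> vt D v1 = vt D v2 \<and>
      fpcls D (vt D v1, [Inl v1, Inr h1, Inr (g_inv (dg_H D) h2), Inl (g_inv (dg_V D) v2)], vt D v2)
        \<in> Jfp D}"

definition phi0 :: "('p,'v,'h,'b) dgrpd \<Rightarrow> 'v \<times> 'h \<Rightarrow> ('p,'v,'h) path set set" where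
  "phi0 D vh = g_comp (Dg D) (jD D (fst vh)) (iD D (snd vh))"

definition phi :: "('p,'v,'h,'b) dgrpd \<Rightarrow> ('v \<times> 'h) set \<Rightarrow> ('p,'v,'h) path set set" where
  "phi D c = the_elem (phi0 D ` c)"

end

theory Submission
  imports Defs
begin


locale gpd =
  fixes Ob :: "'o set" and G :: "('o,'a) grpd"
  assumes gpd: "groupoid Ob G"
begin

abbreviation "arr \<equiv> g_arr G"
abbreviation "src \<equiv> g_src G"
abbreviation "tgt \<equiv> g_tgt G"
abbreviation "cmp \<equiv> g_comp G"
abbreviation "ide \<equiv> g_id G"
abbreviation "iv \<equiv> g_inv G"

lemma src_ob[simp]: "f \<in> arr \<Longrightarrow> src f \<in> Ob" using gpd unfolding groupoid_def by blast
lemma tgt_ob[simp]: "f \<in> arr \<Longrightarrow> tgt f \<in> Ob" using gpd unfolding groupoid_def by blast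
lemma id_arr[simp]: "x \<in> Ob \<Longrightarrow> ide x \<in> arr" using gpd unfolding groupoid_def by blast
lemma src_id[simp]: "x \<in> Ob \<Longrightarrow> src (ide x) = x" using gpd unfolding groupoid_def by blast
lemma tgt_id[simp]: "x \<in> Ob \<Longrightarrow> tgt (ide x) = x" using gpd unfolding groupoid_def by blast
lemma comp_arr[simp]: "f \<in> arr \<Longrightarrow> g \<in> arr \<Longrightarrow> tgt f = src g \<Longrightarrow> cmp f g \<in> arr"
  using gpd unfolding groupoid_def by blast
lemma src_comp[simp]: "f \<in> arr \<Longrightarrow> g \<in> arr \<Longrightarrow> tgt f = src g \<Longrightarrow> src (cmp f g) = src f"
  using gpd unfolding groupoid_def by blast
lemma tgt_comp[simp]: "f \<in> arr \<Longrightarrow> g \<in> arr \<Longrightarrow> tgt f = src g \<Longrightarrow> tgt (cmp f g) = tgt g"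
  using gpd unfolding groupoid_def by blast
lemma assoc: "f \<in> arr \<Longrightarrow> g \<in> arr \<Longrightarrow> h \<in> arr \<Longrightarrow> tgt f = src g \<Longrightarrow> tgt g = src h \<Longrightarrow>
   cmp (cmp f g) h = cmp f (cmp g h)"
  using gpd unfolding groupoid_def by blast
lemma id_left[simp]: "f \<in> arr \<Longrightarrow> x = src f \<Longrightarrow> cmp (ide x) f = f" using gpd unfolding groupoid_def by blast
lemma id_right[simp]: "f \<in> arr \<Longrightarrow> x = tgt f \<Longrightarrow> cmp f (ide x) = f" using gpd unfolding groupoid_def by blast
lemma inv_arr[simp]: "f \<in> arr \<Longrightarrow> iv f \<in> arr" using gpd unfolding groupoid_def by blast
lemma src_inv[simp]: "f \<in> arr \<Longrightarrow> src (iv f) = tgt f" using gpd unfolding groupoid_def by blast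
lemma tgt_inv[simp]: "f \<in> arr \<Longrightarrow> tgt (iv f) = src f" using gpd unfolding groupoid_def by blast
lemma inv_r[simp]: "f \<in> arr \<Longrightarrow> cmp f (iv f) = ide (src f)" using gpd unfolding groupoid_def by blast
lemma inv_l[simp]: "f \<in> arr \<Longrightarrow> cmp (iv f) f = ide (tgt f)" using gpd unfolding groupoid_def by blast

lemma inv_unique:
  assumes "f \<in> arr" "g \<in> arr" "tgt f = src g" "cmp f g = ide (src f)"
  shows "g = iv f"
proof -
  have "g = cmp (cmp (iv f) f) g" using assms(1-3) by simp
  also have "\<dots> = cmp (iv f) (cmp f g)" by (rule assoc) (use assms in auto)
  also have "\<dots> = iv f" using assms by simp
  finally show ?thesis .
qed

lemma inv_inv[simp]: "f \<in> arr \<Longrightarrow> iv (iv f) = f"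
  by (metis inv_l inv_arr inv_unique src_inv tgt_inv)

lemma inv_id[simp]: "x \<in> Ob \<Longrightarrow> iv (ide x) = ide x"
  by (metis id_arr id_left inv_unique src_id tgt_id)

lemma inv_comp:
  assumes "f \<in> arr" "g \<in> arr" "tgt f = src g"
  shows "iv (cmp f g) = cmp (iv g) (iv f)"
proof -
  have "cmp (cmp f g) (cmp (iv g) (iv f)) = cmp f (cmp g (cmp (iv g) (iv f)))"
    using assms by (simp add: assoc)
  also have "\<dots> = cmp f (cmp (cmp g (iv g)) (iv f))"
    using assms assoc[of g "iv g" "iv f"] by simp
  also have "\<dots> = ide (src f)" using assms by simp
  finally show ?thesis using assms by (intro inv_unique[symmetric]) auto
qed

lemma inv_comp_cancel: assumes "f \<in> arr" "g \<in> arr" "tgt f = src g"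
  shows "cmp (iv (cmp f g)) f = iv g"
proof -
  have "cmp (iv (cmp f g)) f = cmp (cmp (iv g) (iv f)) f" using assms inv_comp by simp
  also have "\<dots> = cmp (iv g) (cmp (iv f) f)" by (rule assoc) (use assms in auto)
  also have "\<dots> = iv g" using assms by simp
  finally show ?thesis .
qed

lemma cancel_l: "f \<in> arr \<Longrightarrow> g \<in> arr \<Longrightarrow> tgt f = src g \<Longrightarrow> cmp (iv f) (cmp f g) = g"
  by (metis assoc inv_arr inv_l id_left src_inv tgt_inv)
lemma cancel_r: "f \<in> arr \<Longrightarrow> g \<in> arr \<Longrightarrow> tgt f = src g \<Longrightarrow> cmp (cmp f g) (iv g) = f"
  by (metis assoc inv_arr inv_r id_right src_inv tgt_inv)

end



locale DG =
  fixes D :: "('p,'v,'h,'b) dgrpd"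
  assumes dg: "double_groupoid D" and fill: "filling D"

sublocale DG \<subseteq> V: gpd "dg_obj D" "dg_V D" by unfold_locales (insert dg, unfold double_groupoid_def, elim conjE, assumption)
sublocale DG \<subseteq> H: gpd "dg_obj D" "dg_H D" by unfold_locales (insert dg, unfold double_groupoid_def, elim conjE, assumption)
sublocale DG \<subseteq> BH: gpd "g_arr (dg_V D)" "dg_BH D" by unfold_locales (insert dg, unfold double_groupoid_def, elim conjE, assumption)
sublocale DG \<subseteq> BV: gpd "g_arr (dg_H D)" "dg_BV D" by unfold_locales (insert dg, unfold double_groupoid_def, elim conjE, assumption)

context DG begin

lemma BVarr: "g_arr (dg_BV D) = boxes D" by (insert dg, unfold double_groupoid_def, elim conjE, assumption)

lemma box_top[simp]: "A \<in> boxes D \<Longrightarrow> btop D A \<in> g_arr (dg_H D)" using BV.src_ob BVarr by blast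
lemma box_bot[simp]: "A \<in> boxes D \<Longrightarrow> bbot D A \<in> g_arr (dg_H D)" using BV.tgt_ob BVarr by blast
lemma box_lft[simp]: "A \<in> boxes D \<Longrightarrow> blft D A \<in> g_arr (dg_V D)" using BH.src_ob by blast
lemma box_rgt[simp]: "A \<in> boxes D \<Longrightarrow> brgt D A \<in> g_arr (dg_V D)" using BH.tgt_ob by blast

lemma dgx: "(\<forall>A\<in>boxes D. \<forall>B\<in>boxes D. brgt D A = blft D B \<longrightarrow>
        btop D (g_comp (dg_BH D) A B) = g_comp (dg_H D) (btop D A) (btop D B) \<and>
        bbot D (g_comp (dg_BH D) A B) = g_comp (dg_H D) (bbot D A) (bbot D B)) \<and>
    (\<forall>f\<in>g_arr (dg_V D). btop D (g_id (dg_BH D) f) = g_id (dg_H D) (vt D f) \<and>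
                        bbot D (g_id (dg_BH D) f) = g_id (dg_H D) (vb D f)) \<and>
    (\<forall>A\<in>boxes D. \<forall>B\<in>boxes D. bbot D A = btop D B \<longrightarrow>
        blft D (g_comp (dg_BV D) A B) = g_comp (dg_V D) (blft D A) (blft D B) \<and>
        brgt D (g_comp (dg_BV D) A B) = g_comp (dg_V D) (brgt D A) (brgt D B)) \<and>
    (\<forall>x\<in>g_arr (dg_H D). blft D (g_id (dg_BV D) x) = g_id (dg_V D) (hl D x) \<and>
                        brgt D (g_id (dg_BV D) x) = g_id (dg_V D) (hr D x))"
  by (insert dg, unfold double_groupoid_def, elim conjE, intro conjI; assumption)

lemma corners: "A \<in> boxes D \<Longrightarrow> hl D (btop D A) = vt D (blft D A) \<and> hr D (btop D A) = vt D (brgt D A) \<and>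
                  hl D (bbot D A) = vb D (blft D A) \<and> hr D (bbot D A) = vb D (brgt D A)"
  by (insert dg, unfold double_groupoid_def, elim conjE, drule bspec, assumption, assumption)
lemma corner_tl: "A \<in> boxes D \<Longrightarrow> vt D (blft D A) = hl D (btop D A)"
  using corners by simp
lemma corner_tr: "A \<in> boxes D \<Longrightarrow> vt D (brgt D A) = hr D (btop D A)"
  using corners by simp
lemma corner_bl: "A \<in> boxes D \<Longrightarrow> vb D (blft D A) = hl D (bbot D A)"
  using corners by simp
lemma corner_br: "A \<in> boxes D \<Longrightarrow> vb D (brgt D A) = hr D (bbot D A)"
  using corners by simp

lemma hcomp_top: "A \<in> boxes D \<Longrightarrow> B \<in> boxes D \<Longrightarrow> brgt D A = blft D B \<Longrightarrow>
   btop D (g_comp (dg_BH D) A B) = g_comp (dg_H D) (btop D A) (btop D B)"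
  using dgx by blast
lemma hcomp_bot: "A \<in> boxes D \<Longrightarrow> B \<in> boxes D \<Longrightarrow> brgt D A = blft D B \<Longrightarrow>
   bbot D (g_comp (dg_BH D) A B) = g_comp (dg_H D) (bbot D A) (bbot D B)"
  using dgx by blast
lemma vcomp_lft: "A \<in> boxes D \<Longrightarrow> B \<in> boxes D \<Longrightarrow> bbot D A = btop D B \<Longrightarrow>
   blft D (g_comp (dg_BV D) A B) = g_comp (dg_V D) (blft D A) (blft D B)"
  using dgx by blast
lemma vcomp_rgt: "A \<in> boxes D \<Longrightarrow> B \<in> boxes D \<Longrightarrow> bbot D A = btop D B \<Longrightarrow>
   brgt D (g_comp (dg_BV D) A B) = g_comp (dg_V D) (brgt D A) (brgt D B)"
  using dgx by blast
lemma hid_top: "f \<in> g_arr (dg_V D) \<Longrightarrow> btop D (g_id (dg_BH D) f) = g_id (dg_H D) (vt D f)"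
  using dgx by blast
lemma vid_lft: "x \<in> g_arr (dg_H D) \<Longrightarrow> blft D (g_id (dg_BV D) x) = g_id (dg_V D) (hl D x)"
  using dgx by blast

lemma top_hinv: assumes A: "A \<in> boxes D"
  shows "btop D (g_inv (dg_BH D) A) = g_inv (dg_H D) (btop D A)"
proof -
  let ?A' = "g_inv (dg_BH D) A"
  have A': "?A' \<in> boxes D" using A by simp
  have c: "brgt D A = blft D ?A'" using A by simp
  have "btop D (g_comp (dg_BH D) A ?A') = g_comp (dg_H D) (btop D A) (btop D ?A')"
    using hcomp_top[OF A A' c] .
  moreover have "g_comp (dg_BH D) A ?A' = g_id (dg_BH D) (blft D A)" using A by simp
  moreover have "btop D (g_id (dg_BH D) (blft D A)) = g_id (dg_H D) (hl D (btop D A))"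
    using A hid_top corner_tl by simp
  moreover have "hr D (btop D A) = hl D (btop D ?A')"
    using A A' corner_tr corner_tl c by metis
  ultimately show ?thesis using A A' by (intro H.inv_unique) auto
qed

lemma lft_vinv: assumes A: "A \<in> boxes D"
  shows "blft D (g_inv (dg_BV D) A) = g_inv (dg_V D) (blft D A)"
proof -
  let ?A' = "g_inv (dg_BV D) A"
  have AV: "A \<in> g_arr (dg_BV D)" using A BVarr by simp
  have A': "?A' \<in> boxes D" using AV BVarr BV.inv_arr by blast
  have c: "bbot D A = btop D ?A'" using AV by simp
  have "blft D (g_comp (dg_BV D) A ?A') = g_comp (dg_V D) (blft D A) (blft D ?A')"
    using vcomp_lft[OF A A' c] .
  moreover have "g_comp (dg_BV D) A ?A' = g_id (dg_BV D) (btop D A)" using AV by simp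
  moreover have "blft D (g_id (dg_BV D) (btop D A)) = g_id (dg_V D) (vt D (blft D A))"
    using A vid_lft corner_tl by simp
  moreover have "vb D (blft D A) = vt D (blft D ?A')"
    using A A' corner_bl corner_tl c by metis
  ultimately show ?thesis using A A' by (intro V.inv_unique) auto
qed

lemma fill_tl: "x \<in> g_arr (dg_H D) \<Longrightarrow> f \<in> g_arr (dg_V D) \<Longrightarrow> hl D x = vt D f \<Longrightarrow>
   \<exists>A\<in>boxes D. btop D A = x \<and> blft D A = f"
  using fill unfolding filling_def by blast

lemma fill_tr: assumes "k \<in> g_arr (dg_H D)" "h \<in> g_arr (dg_V D)" "hr D k = vt D h"
  shows "\<exists>B\<in>boxes D. btop D B = k \<and> brgt D B = h"
proof -
  obtain A where A: "A \<in> boxes D" "btop D A = g_inv (dg_H D) k" "blft D A = h"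
    using fill_tl[of "g_inv (dg_H D) k" h] assms by auto
  show ?thesis
    by (rule bexI[of _ "g_inv (dg_BH D) A"]) (use A assms top_hinv in auto)
qed

lemma fill_bl: assumes "x \<in> g_arr (dg_H D)" "v \<in> g_arr (dg_V D)" "vb D v = hl D x"
  shows "\<exists>B\<in>boxes D. bbot D B = x \<and> blft D B = v"
proof -
  obtain A where A: "A \<in> boxes D" "btop D A = x" "blft D A = g_inv (dg_V D) v"
    using fill_tl[of x "g_inv (dg_V D) v"] assms by auto
  have AV: "A \<in> g_arr (dg_BV D)" using A BVarr by simp
  show ?thesis
    by (rule bexI[of _ "g_inv (dg_BV D) A"]) (use A AV assms lft_vinv BVarr BV.inv_arr in auto)
qed

end


context DG begin

lemma lok_simps[simp]: "lok D (Inl v) = (v \<in> g_arr (dg_V D))" "lok D (Inr h) = (h \<in> g_arr (dg_H D))"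
  by (simp_all add: lok_def)
lemma lsrc_simps[simp]: "lsrc D (Inl v) = vt D v" "lsrc D (Inr h) = hl D h"
  by (simp_all add: lsrc_def)
lemma ltgt_simps[simp]: "ltgt D (Inl v) = vb D v" "ltgt D (Inr h) = hr D h"
  by (simp_all add: ltgt_def)
lemma linv_simps[simp]: "linv D (Inl v) = Inl (g_inv (dg_V D) v)" "linv D (Inr h) = Inr (g_inv (dg_H D) h)"
  by (simp_all add: linv_def)

lemma linv_lok[simp]: "lok D a \<Longrightarrow> lok D (linv D a)" by (cases a) auto
lemma linv_lsrc[simp]: "lok D a \<Longrightarrow> lsrc D (linv D a) = ltgt D a" by (cases a) auto
lemma linv_ltgt[simp]: "lok D a \<Longrightarrow> ltgt D (linv D a) = lsrc D a" by (cases a) auto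
lemma linv_linv[simp]: "lok D a \<Longrightarrow> linv D (linv D a) = a" by (cases a) auto
lemma lsrc_ob[simp]: "lok D a \<Longrightarrow> lsrc D a \<in> dg_obj D" by (cases a) auto
lemma ltgt_ob[simp]: "lok D a \<Longrightarrow> ltgt D a \<in> dg_obj D" by (cases a) auto

lemma walk_obj: "walk D p w q \<Longrightarrow> p \<in> dg_obj D \<and> q \<in> dg_obj D"
proof (induction w arbitrary: p)
  case Nil then show ?case by auto
next
  case (Cons a w) then show ?case by (metis lsrc_ob walk.simps(2))
qed

lemma walk_append: "walk D p (u @ w) q \<longleftrightarrow> (\<exists>r. walk D p u r \<and> walk D r w q)"
  by (induction u arbitrary: p) (auto dest: walk_obj)

lemma walk_lok: "walk D p w q \<Longrightarrow> a \<in> set w \<Longrightarrow> lok D a"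
  by (induction w arbitrary: p) auto

lemma walk_rev: "walk D p w q \<Longrightarrow> walk D q (rev (map (linv D) w)) p"
proof (induction w arbitrary: p)
  case Nil then show ?case by auto
next
  case (Cons a w)
  then show ?case by (auto simp: walk_append dest: walk_obj)
qed

lemma map_linv_linv: "walk D p w q \<Longrightarrow> map (linv D) (map (linv D) w) = w"
  by (induction w arbitrary: p) auto

lemma step_walk: "fp_step D a b \<Longrightarrow> walk D p a q \<Longrightarrow> walk D p b q"
  by (induction rule: fp_step.induct) (auto simp: walk_append)

lemma step_ctx: "fp_step D a b \<Longrightarrow> fp_step D (c @ a @ d) (c @ b @ d)"
proof (induction rule: fp_step.induct)
  case (mergeV f g u w) then show ?case using fp_step.mergeV[where D=D and f=f and g=g and u="c@u" and w="w@d"] by simp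
next
  case (mergeH f g u w) then show ?case using fp_step.mergeH[where D=D and f=f and g=g and u="c@u" and w="w@d"] by simp
next
  case (idV p u w) then show ?case using fp_step.idV[where D=D and p=p and u="c@u" and w="w@d"] by simp
next
  case (idH p u w) then show ?case using fp_step.idH[where D=D and p=p and u="c@u" and w="w@d"] by simp
qed

lemma step_rev: "fp_step D a b \<Longrightarrow> fp_step D (rev (map (linv D) a)) (rev (map (linv D) b))"
proof (induction rule: fp_step.induct)
  case (mergeV f g u w) then show ?case
    using fp_step.mergeV[where D=D and f="g_inv (dg_V D) g" and g="g_inv (dg_V D) f" and u="rev (map (linv D) w)" and w="rev (map (linv D) u)"]
    by (simp add: V.inv_comp)
next
  case (mergeH f g u w) then show ?case
    using fp_step.mergeH[where D=D and f="g_inv (dg_H D) g" and g="g_inv (dg_H D) f" and u="rev (map (linv D) w)" and w="rev (map (linv D) u)"]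
    by (simp add: H.inv_comp)
next
  case (idV p u w) then show ?case using fp_step.idV[where D=D and p=p and u="rev (map (linv D) w)" and w="rev (map (linv D) u)"] by simp
next
  case (idH p u w) then show ?case using fp_step.idH[where D=D and p=p and u="rev (map (linv D) w)" and w="rev (map (linv D) u)"] by simp
qed

abbreviation "R \<equiv> fp_rel D \<union> (fp_rel D)\<inverse>"

lemma R_ends: "(\<pi>, \<sigma>) \<in> R\<^sup>* \<Longrightarrow> fst \<pi> = fst \<sigma> \<and> snd (snd \<pi>) = snd (snd \<sigma>)"
  by (induction rule: rtrancl_induct) (auto simp: fp_rel_def)

lemma R_paths: "(\<pi>, \<sigma>) \<in> R \<Longrightarrow> \<pi> \<in> paths D \<and> \<sigma> \<in> paths D"
  by (auto simp: fp_rel_def)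

definition weq where "weq p u w q \<longleftrightarrow> ((p,u,q),(p,w,q)) \<in> fp_eq D"

lemma E_ends: "(\<pi>, \<sigma>) \<in> fp_eq D \<Longrightarrow> fst \<pi> = fst \<sigma> \<and> snd (snd \<pi>) = snd (snd \<sigma>)"
  unfolding fp_eq_def using R_ends by blast

lemma E_weq: "(\<pi>, \<sigma>) \<in> fp_eq D \<Longrightarrow> weq (fst \<pi>) (fst (snd \<pi>)) (fst (snd \<sigma>)) (snd (snd \<pi>))"
  using E_ends[of \<pi> \<sigma>] unfolding weq_def by (cases \<pi>; cases \<sigma>) auto

lemma weq_E: "weq p u w q \<Longrightarrow> ((p,u,q),(p,w,q)) \<in> fp_eq D" by (simp add: weq_def)

lemma weq_walk: "weq p u w q \<Longrightarrow> walk D p u q \<and> walk D p w q"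
  by (auto simp: weq_def fp_eq_def paths_def)

lemma weq_refl: "walk D p u q \<Longrightarrow> weq p u u q"
  by (auto simp: weq_def fp_eq_def paths_def)

lemma weq_sym: "weq p u w q \<Longrightarrow> weq p w u q"
proof -
  have s: "sym (R\<^sup>*)" by (intro sym_rtrancl) (auto simp: sym_def)
  show "weq p u w q \<Longrightarrow> weq p w u q"
    using s unfolding weq_def fp_eq_def sym_def by blast
qed

lemma weq_trans: "weq p u w q \<Longrightarrow> weq p w z q \<Longrightarrow> weq p u z q"
  unfolding weq_def fp_eq_def by (auto intro: rtrancl_trans)

lemma weq_step: "fp_step D a b \<Longrightarrow> walk D p a q \<Longrightarrow> weq p a b q"
  unfolding weq_def fp_eq_def using step_walk[of a b p q]
  by (auto simp: paths_def fp_rel_def)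

lemma walk_app3: "walk D s c r \<Longrightarrow> walk D r x r' \<Longrightarrow> walk D r' d q \<Longrightarrow> walk D s (c @ x @ d) q"
  by (metis walk_append)

lemma Rstar_ctx:
  assumes "(\<pi>, \<sigma>) \<in> R\<^sup>*" "\<pi> \<in> paths D" "walk D s c (fst \<pi>)" "walk D (snd (snd \<pi>)) d q"
  shows "((s, c @ fst (snd \<pi>) @ d, q), (s, c @ fst (snd \<sigma>) @ d, q)) \<in> R\<^sup>*"
  using assms(1)
proof (induction rule: rtrancl_induct)
  case base then show ?case by simp
next
  case (step \<sigma> \<tau>)
  have e1: "fst \<pi> = fst \<sigma> \<and> snd (snd \<pi>) = snd (snd \<sigma>)" using R_ends[OF step(1)] .
  have e2: "fst \<sigma> = fst \<tau> \<and> snd (snd \<sigma>) = snd (snd \<tau>)" using step(2) by (auto simp: fp_rel_def)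
  have ps: "\<sigma> \<in> paths D" "\<tau> \<in> paths D" using R_paths[OF step(2)] by auto
  have w: "walk D s (c @ fst (snd \<sigma>) @ d) q" "walk D s (c @ fst (snd \<tau>) @ d) q"
    using ps e1 e2 assms(3,4) by (auto simp: paths_def intro: walk_app3)
  have "((s, c @ fst (snd \<sigma>) @ d, q), (s, c @ fst (snd \<tau>) @ d, q)) \<in> R"
    using step(2) w by (auto simp: fp_rel_def paths_def intro: step_ctx)
  then show ?case using step(3) by (rule rtrancl_into_rtrancl[rotated])
qed

lemma weq_ctx: "weq r u u' r' \<Longrightarrow> walk D p c r \<Longrightarrow> walk D r' d q \<Longrightarrow> weq p (c @ u @ d) (c @ u' @ d) q"
  unfolding weq_def fp_eq_def
  using Rstar_ctx[of "(r,u,r')" "(r,u',r')" p c d q]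
  by (auto simp: paths_def walk_append)

lemma weq_app: "weq p u u' r \<Longrightarrow> weq r w w' q \<Longrightarrow> weq p (u @ w) (u' @ w') q"
proof -
  assume a: "weq p u u' r" "weq r w w' q"
  have 1: "weq p (u @ w) (u' @ w) q"
    using weq_ctx[OF a(1), of p "[]" w q] weq_walk[OF a(1)] weq_walk[OF a(2)] walk_obj by auto
  have 2: "weq p (u' @ w) (u' @ w') q"
    using weq_ctx[OF a(2), of p u' "[]" q] weq_walk[OF a(1)] weq_walk[OF a(2)] walk_obj by auto
  show ?thesis using weq_trans[OF 1 2] .
qed

lemma Rstar_rev:
  assumes "(\<pi>, \<sigma>) \<in> R\<^sup>*"
  shows "(pinv D \<pi>, pinv D \<sigma>) \<in> R\<^sup>*"
  using assms
proof (induction rule: rtrancl_induct)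
  case base then show ?case by simp
next
  case (step \<sigma> \<tau>)
  have "(pinv D \<sigma>, pinv D \<tau>) \<in> R"
    using step(2) by (auto simp: fp_rel_def paths_def pinv_def intro: step_rev walk_rev)
  then show ?case using step(3) by (rule rtrancl_into_rtrancl[rotated])
qed

lemma weq_rev: "weq p u w q \<Longrightarrow> weq q (rev (map (linv D) u)) (rev (map (linv D) w)) p"
  unfolding weq_def fp_eq_def using Rstar_rev[of "(p,u,q)" "(p,w,q)"]
  by (auto simp: paths_def pinv_def walk_rev)

lemma weq_cancel: "walk D p (u @ a # linv D a # w) q \<Longrightarrow> weq p (u @ a # linv D a # w) (u @ w) q"
proof (cases a)
  case (Inl f)
  assume wk: "walk D p (u @ a # linv D a # w) q"
  then obtain r where r: "walk D p u r" "f \<in> g_arr (dg_V D)" "vt D f = r" "walk D (vt D f) w q"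
    using Inl by (auto simp: walk_append)
  have wk': "walk D p (u @ Inl f # Inl (g_inv (dg_V D) f) # w) q" using wk Inl by simp
  have s0: "weq p (u @ Inl f # Inl (g_inv (dg_V D) f) # w) (u @ Inl (g_comp (dg_V D) f (g_inv (dg_V D) f)) # w) q"
    by (rule weq_step[OF fp_step.mergeV[where D=D and f=f and g="g_inv (dg_V D) f" and u=u and w=w] wk']) (use r in auto)
  have s1: "weq p (u @ a # linv D a # w) (u @ Inl (g_id (dg_V D) (vt D f)) # w) q"
    using s0 Inl r by simp
  have s2: "weq p (u @ Inl (g_id (dg_V D) (vt D f)) # w) (u @ w) q"
    using weq_step[OF fp_step.idV[where D=D and p="vt D f" and u=u and w=w]] s1 weq_walk r by auto
  show ?thesis using weq_trans[OF s1 s2] .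
next
  case (Inr f)
  assume wk: "walk D p (u @ a # linv D a # w) q"
  then obtain r where r: "walk D p u r" "f \<in> g_arr (dg_H D)" "hl D f = r" "walk D (hl D f) w q"
    using Inr by (auto simp: walk_append)
  have wk': "walk D p (u @ Inr f # Inr (g_inv (dg_H D) f) # w) q" using wk Inr by simp
  have s0: "weq p (u @ Inr f # Inr (g_inv (dg_H D) f) # w) (u @ Inr (g_comp (dg_H D) f (g_inv (dg_H D) f)) # w) q"
    by (rule weq_step[OF fp_step.mergeH[where D=D and f=f and g="g_inv (dg_H D) f" and u=u and w=w] wk']) (use r in auto)
  have s1: "weq p (u @ a # linv D a # w) (u @ Inr (g_id (dg_H D) (hl D f)) # w) q"
    using s0 Inr r by simp
  have s2: "weq p (u @ Inr (g_id (dg_H D) (hl D f)) # w) (u @ w) q"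
    using weq_step[OF fp_step.idH[where D=D and p="hl D f" and u=u and w=w]] s1 weq_walk r by auto
  show ?thesis using weq_trans[OF s1 s2] .
qed

lemma weq_inv_r: "walk D p w q \<Longrightarrow> weq p (w @ rev (map (linv D) w)) [] p"
proof (induction w arbitrary: p)
  case Nil then show ?case by (auto intro!: weq_refl)
next
  case (Cons a w)
  then have a: "lok D a" "lsrc D a = p" "walk D (ltgt D a) w q" by auto
  have ih: "weq (ltgt D a) (w @ rev (map (linv D) w)) [] (ltgt D a)" using Cons a by blast
  have 1: "weq p ([a] @ (w @ rev (map (linv D) w)) @ [linv D a]) ([a] @ [] @ [linv D a]) p"
    by (rule weq_ctx[OF ih]) (use a in \<open>auto dest: walk_obj\<close>)
  have 2: "weq p ([] @ a # linv D a # []) ([] @ []) p"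
    by (rule weq_cancel) (use a in \<open>auto dest: walk_obj\<close>)
  show ?case using weq_trans[OF 1] 2 by simp
qed

lemma weq_inv_l: "walk D p w q \<Longrightarrow> weq q (rev (map (linv D) w) @ w) [] q"
  using weq_inv_r[OF walk_rev[of p w q]] map_linv_linv[of p w q] by (simp add: rev_map)

end


context DG begin

abbreviation "Cl \<equiv> fpcls D"

lemma fp_equiv: "equiv (paths D) (fp_eq D)"
proof -
  have s: "sym (R\<^sup>*)" by (intro sym_rtrancl) (auto simp: sym_def)
  show ?thesis unfolding equiv_def refl_on_def sym_def trans_def fp_eq_def
    using s unfolding sym_def by (auto intro: rtrancl_trans)
qed

lemma FP_arr: "g_arr (FP D) = paths D // fp_eq D" by (simp add: FP_def)

lemma cls_in: "walk D p u q \<Longrightarrow> Cl (p,u,q) \<in> g_arr (FP D)"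
  unfolding FP_arr fpcls_def by (intro quotientI) (simp add: paths_def)

lemma arr_cls: "X \<in> g_arr (FP D) \<Longrightarrow> \<exists>p u q. walk D p u q \<and> X = Cl (p,u,q)"
  unfolding FP_arr fpcls_def by (erule quotientE) (auto simp: paths_def)

lemma cls_eq: "walk D p u q \<Longrightarrow> walk D p' u' q' \<Longrightarrow>
   Cl (p,u,q) = Cl (p',u',q') \<longleftrightarrow> p' = p \<and> q' = q \<and> weq p u u' q"
proof -
  assume w: "walk D p u q" "walk D p' u' q'"
  have "Cl (p,u,q) = Cl (p',u',q') \<longleftrightarrow> ((p,u,q),(p',u',q')) \<in> fp_eq D"
    unfolding fpcls_def using eq_equiv_class_iff[OF fp_equiv] w by (simp add: paths_def)
  also have "\<dots> \<longleftrightarrow> p' = p \<and> q' = q \<and> weq p u u' q"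
    using E_ends[of "(p,u,q)" "(p',u',q')"] by (auto simp: weq_def)
  finally show ?thesis .
qed

lemma in_cls: "\<rho> \<in> Cl (p,u,q) \<Longrightarrow> \<exists>u'. \<rho> = (p,u',q) \<and> weq p u u' q"
  unfolding fpcls_def using E_ends[of "(p,u,q)" \<rho>] by (cases \<rho>) (auto simp: weq_def)

lemma self_cls: "walk D p u q \<Longrightarrow> (p,u,q) \<in> Cl (p,u,q)"
  unfolding fpcls_def using weq_refl by (simp add: weq_def)

lemma some_cls: "walk D p u q \<Longrightarrow> \<exists>u'. (SOME \<rho>. \<rho> \<in> Cl (p,u,q)) = (p,u',q) \<and> weq p u u' q"
  by (metis in_cls self_cls someI)

lemma FP_src: "walk D p u q \<Longrightarrow> g_src (FP D) (Cl (p,u,q)) = p"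
  using some_cls by (fastforce simp: FP_def)
lemma FP_tgt: "walk D p u q \<Longrightarrow> g_tgt (FP D) (Cl (p,u,q)) = q"
  using some_cls by (fastforce simp: FP_def)

lemma FP_comp: "walk D p u r \<Longrightarrow> walk D r w q \<Longrightarrow>
   g_comp (FP D) (Cl (p,u,r)) (Cl (r,w,q)) = Cl (p, u @ w, q)"
proof -
  assume a: "walk D p u r" "walk D r w q"
  obtain u' where u': "(SOME \<rho>. \<rho> \<in> Cl (p,u,r)) = (p,u',r)" "weq p u u' r" using some_cls[OF a(1)] by blast
  obtain w' where w': "(SOME \<rho>. \<rho> \<in> Cl (r,w,q)) = (r,w',q)" "weq r w w' q" using some_cls[OF a(2)] by blast
  have e: "weq p (u @ w) (u' @ w') q" using weq_app[OF u'(2) w'(2)] .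
  have "g_comp (FP D) (Cl (p,u,r)) (Cl (r,w,q)) = Cl (p, u' @ w', q)"
    using u' w' by (simp add: FP_def pconc_def)
  also have "\<dots> = Cl (p, u @ w, q)"
    using cls_eq e weq_walk by blast
  finally show ?thesis .
qed

lemma FP_inv: "walk D p u q \<Longrightarrow> g_inv (FP D) (Cl (p,u,q)) = Cl (q, rev (map (linv D) u), p)"
proof -
  assume a: "walk D p u q"
  obtain u' where u': "(SOME \<rho>. \<rho> \<in> Cl (p,u,q)) = (p,u',q)" "weq p u u' q" using some_cls[OF a(1)] by blast
  have e: "weq q (rev (map (linv D) u)) (rev (map (linv D) u')) p" using weq_rev[OF u'(2)] .
  have "g_inv (FP D) (Cl (p,u,q)) = Cl (q, rev (map (linv D) u'), p)"
    using u' by (simp add: FP_def pinv_def)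
  also have "\<dots> = Cl (q, rev (map (linv D) u), p)"
    using cls_eq e weq_walk by metis
  finally show ?thesis .
qed

definition bw where "bw A = [Inr (btop D A), Inl (brgt D A), Inr (g_inv (dg_H D) (bbot D A)), Inl (g_inv (dg_V D) (blft D A))]"

lemma bw_walk: "A \<in> boxes D \<Longrightarrow> walk D (hl D (btop D A)) (bw A) (hl D (btop D A))"
  by (auto simp: bw_def corner_tl corner_tr corner_bl corner_br)

definition Jw where "Jw p u \<longleftrightarrow> walk D p u p \<and> Cl (p,u,p) \<in> Jfp D"

lemma Jfp_cls: "X \<in> Jfp D \<Longrightarrow> \<exists>p u. walk D p u p \<and> X = Cl (p,u,p)"
proof (induction rule: Jfp.induct)
  case (gen A) then show ?case using bw_walk unfolding box_word_def bw_def by blast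
next
  case (comp X Y)
  then obtain p u q w where pu: "walk D p u p" "X = Cl (p,u,p)" "walk D q w q" "Y = Cl (q,w,q)" by blast
  then have "p = q" using comp FP_src FP_tgt by metis
  then show ?case using pu FP_comp walk_append by metis
next
  case (inv X)
  then obtain p u where pu: "walk D p u p" "X = Cl (p,u,p)" by blast
  then show ?case using FP_inv walk_rev by metis
qed

lemma Jfp_loop: "Cl (p,u,q) \<in> Jfp D \<Longrightarrow> walk D p u q \<Longrightarrow> p = q"
  using Jfp_cls cls_eq by metis

lemma J_box: "A \<in> boxes D \<Longrightarrow> Jw (hl D (btop D A)) (bw A)"
  unfolding Jw_def using bw_walk Jfp.gen[of A D] unfolding box_word_def bw_def by auto

lemma J_walk: "Jw p u \<Longrightarrow> walk D p u p" by (simp add: Jw_def)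

lemma J_comp: "Jw p u \<Longrightarrow> Jw p w \<Longrightarrow> Jw p (u @ w)"
  unfolding Jw_def using Jfp.comp[of "Cl (p,u,p)" D "Cl (p,w,p)"] FP_comp FP_src FP_tgt walk_append by metis

lemma J_inv: "Jw p u \<Longrightarrow> Jw p (rev (map (linv D) u))"
  unfolding Jw_def using Jfp.inv[of "Cl (p,u,p)" D] FP_inv walk_rev by metis

lemma J_weq: "Jw p u \<Longrightarrow> weq p u w p \<Longrightarrow> Jw p w"
  unfolding Jw_def using cls_eq weq_walk by metis

lemma J_induct[consumes 1, case_names box comp inv weq]:
  assumes "Jw p u"
    and Pbox: "\<And>A. A \<in> boxes D \<Longrightarrow> P (hl D (btop D A)) (bw A)"
    and Pcomp: "\<And>p u w. P p u \<Longrightarrow> P p w \<Longrightarrow> Jw p u \<Longrightarrow> Jw p w \<Longrightarrow> P p (u @ w)"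
    and Pinv: "\<And>p u. P p u \<Longrightarrow> Jw p u \<Longrightarrow> P p (rev (map (linv D) u))"
    and Pweq: "\<And>p u w. P p u \<Longrightarrow> weq p u w p \<Longrightarrow> P p w"
  shows "P p u"
proof -
  have "X \<in> Jfp D \<Longrightarrow> (\<forall>p u. walk D p u p \<and> X = Cl (p,u,p) \<longrightarrow> P p u)" for X
  proof (induction rule: Jfp.induct)
    case (gen A)
    show ?case
    proof (intro allI impI)
      fix p u assume a: "walk D p u p \<and> box_word D A = Cl (p, u, p)"
      then have "hl D (btop D A) = p" "weq p (bw A) u p"
        using cls_eq[OF bw_walk[OF gen]] unfolding box_word_def bw_def by auto
      then show "P p u" using Pbox[OF gen] Pweq by blast
    qed
  next
    case (comp X Y)
    show ?case
    proof (intro allI impI)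
      fix p u assume a: "walk D p u p \<and> g_comp (FP D) X Y = Cl (p, u, p)"
      obtain p1 u1 where r1: "walk D p1 u1 p1" "X = Cl (p1,u1,p1)"
        using Jfp_cls[OF comp.hyps(1)] by blast
      obtain p2 u2 where r2: "walk D p2 u2 p2" "Y = Cl (p2,u2,p2)"
        using Jfp_cls[OF comp.hyps(2)] by blast
      note r = r1 r2
      have "p1 = p2" using comp.hyps(3) FP_src[OF r2(1)] FP_tgt[OF r1(1)] r by simp
      have c: "g_comp (FP D) X Y = Cl (p1, u1 @ u2, p1)" using r FP_comp \<open>p1 = p2\<close> by simp
      have wk: "walk D p1 (u1 @ u2) p1" using r \<open>p1 = p2\<close> walk_append by blast
      have j: "Jw p1 u1" "Jw p1 u2" using r comp.hyps \<open>p1 = p2\<close> by (auto simp: Jw_def)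
      have P: "P p1 (u1 @ u2)" using comp.IH r j \<open>p1 = p2\<close> Pcomp by blast
      have "p1 = p" "weq p (u1 @ u2) u p" using a c cls_eq[OF wk, of p u p] by auto
      then show "P p u" using P Pweq by blast
    qed
  next
    case (inv X)
    show ?case
    proof (intro allI impI)
      fix p u assume a: "walk D p u p \<and> g_inv (FP D) X = Cl (p, u, p)"
      obtain p1 u1 where r: "walk D p1 u1 p1" "X = Cl (p1,u1,p1)" using Jfp_cls[OF inv.hyps] by blast
      have c: "g_inv (FP D) X = Cl (p1, rev (map (linv D) u1), p1)" using r FP_inv by simp
      have wk: "walk D p1 (rev (map (linv D) u1)) p1" using r walk_rev by blast
      have j: "Jw p1 u1" using r inv.hyps by (auto simp: Jw_def)
      have P: "P p1 (rev (map (linv D) u1))" using inv.IH r j Pinv by blast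
      have "p1 = p" "weq p (rev (map (linv D) u1)) u p"
        using a c cls_eq[OF wk, of p u p] by auto
      then show "P p u" using P Pweq by blast
    qed
  qed
  then show ?thesis using assms(1) unfolding Jw_def by blast
qed

end


context DG begin

lemma conj_box_V:
  assumes A: "A \<in> boxes D" and v: "v \<in> g_arr (dg_V D)" "vb D v = hl D (btop D A)"
  shows "Jw (vt D v) (Inl v # bw A @ [Inl (g_inv (dg_V D) v)])"
proof -
  let ?x = "btop D A" and ?g = "brgt D A" and ?y = "bbot D A" and ?h = "blft D A"
  obtain B where B: "B \<in> boxes D" "bbot D B = ?x" "blft D B = v"
    using fill_bl[of ?x v] A v by auto
  let ?xB = "btop D B" and ?gB = "brgt D B"
  have BV1: "B \<in> g_arr (dg_BV D)" "A \<in> g_arr (dg_BV D)" using A B BVarr by auto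
  have cBA: "g_tgt (dg_BV D) B = g_src (dg_BV D) A" using B by simp
  let ?BA = "g_comp (dg_BV D) B A"
  have BA: "?BA \<in> boxes D" using BV.comp_arr[OF BV1 cBA] BVarr by simp
  have BAt: "btop D ?BA = ?xB" using BV.src_comp[OF BV1 cBA] .
  have BAb: "bbot D ?BA = ?y" using BV.tgt_comp[OF BV1 cBA] .
  have BAl: "blft D ?BA = g_comp (dg_V D) v ?h" using vcomp_lft[OF B(1) A] B by simp
  have BAr: "brgt D ?BA = g_comp (dg_V D) ?gB ?g" using vcomp_rgt[OF B(1) A] B by simp
  have ar: "?x \<in> g_arr (dg_H D)" "?y \<in> g_arr (dg_H D)" "?xB \<in> g_arr (dg_H D)"
    "?g \<in> g_arr (dg_V D)" "?h \<in> g_arr (dg_V D)" "?gB \<in> g_arr (dg_V D)" using A B by auto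
  have co: "vt D ?h = hl D ?x" "vt D ?g = hr D ?x" "vb D ?h = hl D ?y" "vb D ?g = hr D ?y"
    "vt D v = hl D ?xB" "vt D ?gB = hr D ?xB" "vb D v = hl D ?x" "vb D ?gB = hr D ?x"
    using A B corner_tl corner_tr corner_bl corner_br by (metis)+
  have J1: "Jw (vt D v) (rev (map (linv D) (bw B)))" using J_inv[OF J_box[OF B(1)]] co by simp
  have J2: "Jw (vt D v) (bw ?BA)" using J_box[OF BA] BAt co by simp
  have J3: "Jw (vt D v) (rev (map (linv D) (bw B)) @ bw ?BA)" using J_comp[OF J1 J2] .
  have w1: "rev (map (linv D) (bw B)) @ bw ?BA =
    [Inl v, Inr ?x, Inl (g_inv (dg_V D) ?gB)] @ Inr (g_inv (dg_H D) ?xB) # linv D (Inr (g_inv (dg_H D) ?xB)) #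
      [Inl (g_comp (dg_V D) ?gB ?g), Inr (g_inv (dg_H D) ?y), Inl (g_inv (dg_V D) (g_comp (dg_V D) v ?h))]"
    using B ar v BAt BAb BAl BAr by (simp add: bw_def)
  have s1: "weq (vt D v) (rev (map (linv D) (bw B)) @ bw ?BA)
     ([Inl v, Inr ?x, Inl (g_inv (dg_V D) ?gB)] @
      [Inl (g_comp (dg_V D) ?gB ?g), Inr (g_inv (dg_H D) ?y), Inl (g_inv (dg_V D) (g_comp (dg_V D) v ?h))]) (vt D v)"
    unfolding w1 by (rule weq_cancel) (use ar v co in simp)
  have s2: "weq (vt D v) ([Inl v, Inr ?x] @ Inl (g_inv (dg_V D) ?gB) #
      Inl (g_comp (dg_V D) ?gB ?g) # [Inr (g_inv (dg_H D) ?y), Inl (g_inv (dg_V D) (g_comp (dg_V D) v ?h))])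
    ([Inl v, Inr ?x] @ Inl (g_comp (dg_V D) (g_inv (dg_V D) ?gB) (g_comp (dg_V D) ?gB ?g)) #
      [Inr (g_inv (dg_H D) ?y), Inl (g_inv (dg_V D) (g_comp (dg_V D) v ?h))]) (vt D v)"
    by (rule weq_step[OF fp_step.mergeV]) (use ar v co in simp_all)
  have e1: "g_comp (dg_V D) (g_inv (dg_V D) ?gB) (g_comp (dg_V D) ?gB ?g) = ?g"
    using V.cancel_l ar co by simp
  have M: "weq (vt D v) (rev (map (linv D) (bw B)) @ bw ?BA)
     [Inl v, Inr ?x, Inl ?g, Inr (g_inv (dg_H D) ?y), Inl (g_inv (dg_V D) (g_comp (dg_V D) v ?h))] (vt D v)"
    using weq_trans[OF s1] s2 e1 by simp
  have s3: "weq (vt D v) ([Inl v, Inr ?x, Inl ?g, Inr (g_inv (dg_H D) ?y)] @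
       Inl (g_inv (dg_V D) ?h) # Inl (g_inv (dg_V D) v) # [])
    ([Inl v, Inr ?x, Inl ?g, Inr (g_inv (dg_H D) ?y)] @
       Inl (g_comp (dg_V D) (g_inv (dg_V D) ?h) (g_inv (dg_V D) v)) # []) (vt D v)"
    by (rule weq_step[OF fp_step.mergeV]) (use ar v co in simp_all)
  have e2: "g_comp (dg_V D) (g_inv (dg_V D) ?h) (g_inv (dg_V D) v) = g_inv (dg_V D) (g_comp (dg_V D) v ?h)"
    using V.inv_comp ar co v by simp
  have T: "weq (vt D v) (Inl v # bw A @ [Inl (g_inv (dg_V D) v)])
     [Inl v, Inr ?x, Inl ?g, Inr (g_inv (dg_H D) ?y), Inl (g_inv (dg_V D) (g_comp (dg_V D) v ?h))] (vt D v)"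
    using s3 e2 by (simp add: bw_def)
  show ?thesis using J_weq[OF J3 weq_trans[OF M weq_sym[OF T]]] .
qed

lemma conj_box_H:
  assumes A: "A \<in> boxes D" and k: "k \<in> g_arr (dg_H D)" "hr D k = hl D (btop D A)"
  shows "Jw (hl D k) (Inr k # bw A @ [Inr (g_inv (dg_H D) k)])"
proof -
  let ?x = "btop D A" and ?g = "brgt D A" and ?y = "bbot D A" and ?h = "blft D A"
  have kh: "hr D k = vt D ?h" using k A corner_tl by simp
  obtain B where B: "B \<in> boxes D" "btop D B = k" "brgt D B = ?h"
    using fill_tr[of k ?h] A k kh by auto
  let ?yB = "bbot D B" and ?hB = "blft D B"
  have cBA: "g_tgt (dg_BH D) B = g_src (dg_BH D) A" using B by simp
  let ?BA = "g_comp (dg_BH D) B A"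
  have BA: "?BA \<in> boxes D" using BH.comp_arr[OF B(1) A cBA] by simp
  have BAl: "blft D ?BA = ?hB" using BH.src_comp[OF B(1) A cBA] .
  have BAr: "brgt D ?BA = ?g" using BH.tgt_comp[OF B(1) A cBA] .
  have BAt: "btop D ?BA = g_comp (dg_H D) k ?x" using hcomp_top[OF B(1) A] B by simp
  have BAb: "bbot D ?BA = g_comp (dg_H D) ?yB ?y" using hcomp_bot[OF B(1) A] B by simp
  have ar: "?x \<in> g_arr (dg_H D)" "?y \<in> g_arr (dg_H D)" "?yB \<in> g_arr (dg_H D)"
    "?g \<in> g_arr (dg_V D)" "?h \<in> g_arr (dg_V D)" "?hB \<in> g_arr (dg_V D)" using A B by auto
  have co: "vt D ?h = hl D ?x" "vt D ?g = hr D ?x" "vb D ?h = hl D ?y" "vb D ?g = hr D ?y"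
    "vt D ?hB = hl D k" "vt D ?h = hr D k" "vb D ?hB = hl D ?yB" "vb D ?h = hr D ?yB"
    using A B corner_tl corner_tr corner_bl corner_br by (metis)+
  have J1: "Jw (hl D k) (rev (map (linv D) (bw B)))" using J_inv[OF J_box[OF B(1)]] B by simp
  have J2: "Jw (hl D k) (bw ?BA)" using J_box[OF BA] BAt co ar k by simp
  have J3: "Jw (hl D k) (bw ?BA @ rev (map (linv D) (bw B)))" using J_comp[OF J2 J1] .
  have w1: "bw ?BA @ rev (map (linv D) (bw B)) =
    [Inr (g_comp (dg_H D) k ?x), Inl ?g, Inr (g_inv (dg_H D) (g_comp (dg_H D) ?yB ?y))] @
      Inl (g_inv (dg_V D) ?hB) # linv D (Inl (g_inv (dg_V D) ?hB)) #
      [Inr ?yB, Inl (g_inv (dg_V D) ?h), Inr (g_inv (dg_H D) k)]"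
    using B ar k BAt BAb BAl BAr by (simp add: bw_def)
  have s1: "weq (hl D k) (bw ?BA @ rev (map (linv D) (bw B)))
     ([Inr (g_comp (dg_H D) k ?x), Inl ?g, Inr (g_inv (dg_H D) (g_comp (dg_H D) ?yB ?y))] @
      [Inr ?yB, Inl (g_inv (dg_V D) ?h), Inr (g_inv (dg_H D) k)]) (hl D k)"
    unfolding w1 by (rule weq_cancel) (use ar k co in simp)
  have s2: "weq (hl D k) ([Inr (g_comp (dg_H D) k ?x), Inl ?g] @ Inr (g_inv (dg_H D) (g_comp (dg_H D) ?yB ?y)) #
      Inr ?yB # [Inl (g_inv (dg_V D) ?h), Inr (g_inv (dg_H D) k)])
    ([Inr (g_comp (dg_H D) k ?x), Inl ?g] @ Inr (g_comp (dg_H D) (g_inv (dg_H D) (g_comp (dg_H D) ?yB ?y)) ?yB) #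
      [Inl (g_inv (dg_V D) ?h), Inr (g_inv (dg_H D) k)]) (hl D k)"
    by (rule weq_step[OF fp_step.mergeH]) (use ar k co in simp_all)
  have e1: "g_comp (dg_H D) (g_inv (dg_H D) (g_comp (dg_H D) ?yB ?y)) ?yB = g_inv (dg_H D) ?y"
    using H.inv_comp_cancel ar co by simp
  have M: "weq (hl D k) (bw ?BA @ rev (map (linv D) (bw B)))
     [Inr (g_comp (dg_H D) k ?x), Inl ?g, Inr (g_inv (dg_H D) ?y), Inl (g_inv (dg_V D) ?h), Inr (g_inv (dg_H D) k)] (hl D k)"
    using weq_trans[OF s1] s2 e1 by simp
  have s3: "weq (hl D k) ([] @ Inr k # Inr ?x # [Inl ?g, Inr (g_inv (dg_H D) ?y), Inl (g_inv (dg_V D) ?h), Inr (g_inv (dg_H D) k)])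
    ([] @ Inr (g_comp (dg_H D) k ?x) # [Inl ?g, Inr (g_inv (dg_H D) ?y), Inl (g_inv (dg_V D) ?h), Inr (g_inv (dg_H D) k)]) (hl D k)"
    by (rule weq_step[OF fp_step.mergeH]) (use ar k co in simp_all)
  have T: "weq (hl D k) (Inr k # bw A @ [Inr (g_inv (dg_H D) k)])
     [Inr (g_comp (dg_H D) k ?x), Inl ?g, Inr (g_inv (dg_H D) ?y), Inl (g_inv (dg_V D) ?h), Inr (g_inv (dg_H D) k)] (hl D k)"
    using s3 by (simp add: bw_def)
  show ?thesis using J_weq[OF J3 weq_trans[OF M weq_sym[OF T]]] .
qed

lemma conj1: "Jw p u \<Longrightarrow> lok D a \<Longrightarrow> ltgt D a = p \<Longrightarrow> Jw (lsrc D a) (a # u @ [linv D a])"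
proof (induction p u arbitrary: a rule: J_induct)
  case (box A)
  then show ?case using conj_box_V[OF box(1)] conj_box_H[OF box(1)] by (cases a) auto
next
  case (comp p u w)
  have J: "Jw (lsrc D a) ((a # u @ [linv D a]) @ (a # w @ [linv D a]))"
    using J_comp comp by blast
  have "weq (lsrc D a) ((a # u) @ linv D a # linv D (linv D a) # (w @ [linv D a])) ((a # u) @ (w @ [linv D a])) (lsrc D a)"
    by (rule weq_cancel) (use J_walk[OF J] comp in simp)
  then show ?case using J_weq[OF J] comp by simp
next
  case (inv p u)
  then show ?case using J_inv[OF inv(1)[OF inv(3,4)]] by simp
next
  case (weq p u w)
  have "weq (lsrc D a) ([a] @ u @ [linv D a]) ([a] @ w @ [linv D a]) (lsrc D a)"
    by (rule weq_ctx[OF weq(2)]) (use weq(3,4) in \<open>auto dest: walk_obj weq_walk\<close>)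
  moreover have "Jw (lsrc D a) (a # u @ [linv D a])" using weq by blast
  ultimately show ?case using J_weq by simp
qed

lemma conj: "Jw p u \<Longrightarrow> walk D q c p \<Longrightarrow> Jw q (c @ u @ rev (map (linv D) c))"
proof (induction c arbitrary: q)
  case Nil then show ?case by auto
next
  case (Cons a c)
  have "Jw (ltgt D a) (c @ u @ rev (map (linv D) c))" using Cons.IH[OF Cons.prems(1)] Cons.prems(2) by simp
  from conj1[OF this, of a] Cons.prems show ?case by auto
qed


end


context DG begin

abbreviation "rv w \<equiv> rev (map (linv D) w)"

definition JE where "JE p u q w \<longleftrightarrow> walk D p u q \<and> walk D p w q \<and> Jw p (u @ rv w)"

lemma J_id: assumes p: "p \<in> dg_obj D" shows "Jw p []"
proof -
  obtain A where A: "A \<in> boxes D" "btop D A = g_id (dg_H D) p" "blft D A = g_id (dg_V D) p"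
    using fill_tl[of "g_id (dg_H D) p" "g_id (dg_V D) p"] p by auto
  have hp: "hl D (btop D A) = p" using A p by simp
  have J: "Jw p (bw A @ rv (bw A))" using J_comp[OF J_box[OF A(1)] J_inv[OF J_box[OF A(1)]]] hp by simp
  have W: "weq p (bw A @ rv (bw A)) [] p" using weq_inv_r[OF J_walk[OF J_box[OF A(1)]]] hp by simp
  show ?thesis using J_weq[OF J W] .
qed

lemma JE_refl: "walk D p u q \<Longrightarrow> JE p u q u"
  unfolding JE_def using J_weq[OF J_id weq_sym[OF weq_inv_r]] walk_obj by blast

lemma JE_walk: "JE p u q w \<Longrightarrow> walk D p u q \<and> walk D p w q" by (simp add: JE_def)

lemma rv_rv: "walk D p w q \<Longrightarrow> rv (rv w) = w"
  using map_linv_linv[of p w q] by (simp add: rev_map)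

lemma JE_sym: "JE p u q w \<Longrightarrow> JE p w q u"
proof -
  assume a: "JE p u q w"
  have "Jw p (rv (u @ rv w))" using J_inv a unfolding JE_def by blast
  moreover have "rv (u @ rv w) = w @ rv u"
    using rv_rv[of p w q] a by (simp add: JE_def)
  ultimately show ?thesis using a by (simp add: JE_def)
qed

lemma JE_trans: "JE p u q w \<Longrightarrow> JE p w q z \<Longrightarrow> JE p u q z"
proof -
  assume a: "JE p u q w" "JE p w q z"
  have J: "Jw p ((u @ rv w) @ (w @ rv z))" using J_comp a unfolding JE_def by blast
  have "weq p (u @ (rv w @ w) @ rv z) (u @ [] @ rv z) p"
    by (rule weq_ctx[OF weq_inv_l]) (use a in \<open>auto simp: JE_def intro: walk_rev\<close>)
  then have W: "weq p ((u @ rv w) @ (w @ rv z)) (u @ rv z) p" by simp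
  have "Jw p (u @ rv z)" using J_weq[OF J W] .
  then show ?thesis using a by (simp add: JE_def)
qed

lemma JE_weq: "weq p u w q \<Longrightarrow> JE p u q w"
proof -
  assume a: "weq p u w q"
  have J: "Jw p (u @ rv u)" using JE_refl weq_walk a unfolding JE_def by blast
  have "weq p (u @ rv u @ []) (u @ rv w @ []) p"
    by (rule weq_ctx[OF weq_rev[OF a]]) (use walk_obj[OF conjunct1[OF weq_walk[OF a]]] conjunct1[OF weq_walk[OF a]] in auto)
  then have W: "weq p (u @ rv u) (u @ rv w) p" by simp
  show ?thesis using J_weq[OF J W] a weq_walk unfolding JE_def by blast
qed

lemma JE_app: "JE p u r u' \<Longrightarrow> JE r w q w' \<Longrightarrow> JE p (u @ w) q (u' @ w')"
proof -
  assume a: "JE p u r u'" "JE r w q w'"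
  have wu: "walk D p u r" "walk D p u' r" "walk D r w q" "walk D r w' q" using a by (auto simp: JE_def)
  have J1: "Jw p (u @ (w @ rv w') @ rv u)" using conj[of r "w @ rv w'" p u] a wu unfolding JE_def by blast
  have J2: "Jw p (u @ rv u')" using a unfolding JE_def by blast
  have J: "Jw p ((u @ w @ rv w') @ (rv u @ u) @ rv u')" using J_comp[OF J1 J2] by simp
  have "weq p ((u @ w @ rv w') @ (rv u @ u) @ rv u') ((u @ w @ rv w') @ [] @ rv u') p"
    by (rule weq_ctx[OF weq_inv_l[OF wu(1)]]) (use wu in \<open>auto simp: walk_append intro: walk_rev\<close>)
  then have W: "weq p ((u @ w @ rv w') @ (rv u @ u) @ rv u') ((u @ w) @ rv (u' @ w')) p" by simp
  have "Jw p ((u @ w) @ rv (u' @ w'))" using J_weq[OF J W] .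
  then show ?thesis using wu by (auto simp: JE_def walk_append)
qed


lemma Deq_cls: assumes "walk D p u q" "walk D p' w q'"
  shows "(Cl (p,u,q), Cl (p',w,q')) \<in> Deq D \<longleftrightarrow> p' = p \<and> q' = q \<and> JE p u q w"
proof
  assume d: "(Cl (p,u,q), Cl (p',w,q')) \<in> Deq D"
  then have e: "p' = p" "q' = q" using assms FP_src FP_tgt unfolding Deq_def by auto
  have "g_comp (FP D) (Cl (p,u,q)) (g_inv (FP D) (Cl (p,w,q))) = Cl (p, u @ rv w, p)"
    using assms e FP_inv FP_comp walk_rev by simp
  then have "Cl (p, u @ rv w, p) \<in> Jfp D" using d e unfolding Deq_def by auto
  moreover have "walk D p (u @ rv w) p" using assms e walk_rev walk_append by blast
  ultimately show "p' = p \<and> q' = q \<and> JE p u q w" using e assms by (auto simp: JE_def Jw_def)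
next
  assume a: "p' = p \<and> q' = q \<and> JE p u q w"
  have "g_comp (FP D) (Cl (p,u,q)) (g_inv (FP D) (Cl (p,w,q))) = Cl (p, u @ rv w, p)"
    using assms a FP_inv FP_comp walk_rev by simp
  then show "(Cl (p,u,q), Cl (p',w,q')) \<in> Deq D"
    using a assms cls_in FP_src FP_tgt unfolding Deq_def JE_def Jw_def by auto
qed

lemma Deq_arr: "(X, Y) \<in> Deq D \<Longrightarrow> X \<in> g_arr (FP D) \<and> Y \<in> g_arr (FP D)"
  by (simp add: Deq_def)

lemma Deq_equiv: "equiv (g_arr (FP D)) (Deq D)"
proof (rule equivI)
  show "Deq D \<subseteq> g_arr (FP D) \<times> g_arr (FP D)" using Deq_arr by auto
  show "refl_on (g_arr (FP D)) (Deq D)"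
  proof (rule refl_onI)
    fix X assume "X \<in> g_arr (FP D)"
    then obtain p u q where "walk D p u q" "X = Cl (p,u,q)" using arr_cls by blast
    then show "(X, X) \<in> Deq D" using Deq_cls JE_refl by simp
  qed
  show "sym (Deq D)"
  proof (rule symI)
    fix X Y assume d: "(X, Y) \<in> Deq D"
    obtain p u q where X: "walk D p u q" "X = Cl (p,u,q)" using arr_cls Deq_arr[OF d] by blast
    obtain p' w q' where Y: "walk D p' w q'" "Y = Cl (p',w,q')" using arr_cls Deq_arr[OF d] by blast
    have 1: "p' = p" "q' = q" "JE p u q w" using d X Y Deq_cls by auto
    show "(Y, X) \<in> Deq D" using Deq_cls[OF Y(1) X(1)] 1 JE_sym X Y by simp
  qed
  show "trans (Deq D)"
  proof (rule transI)
    fix X Y Z assume d: "(X, Y) \<in> Deq D" "(Y, Z) \<in> Deq D"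
    obtain p u q where X: "walk D p u q" "X = Cl (p,u,q)" using arr_cls Deq_arr[OF d(1)] by blast
    obtain p' w q' where Y: "walk D p' w q'" "Y = Cl (p',w,q')" using arr_cls Deq_arr[OF d(1)] by blast
    obtain p'' z q'' where Z: "walk D p'' z q''" "Z = Cl (p'',z,q'')" using arr_cls Deq_arr[OF d(2)] by blast
    have 1: "p' = p" "q' = q" "JE p u q w" using d(1) X Y Deq_cls by auto
    have 2: "p'' = p" "q'' = q" "JE p w q z" using d(2) X Y Z Deq_cls 1 by auto
    show "(X, Z) \<in> Deq D" using X Z 1 2 Deq_cls JE_trans by simp
  qed
qed

abbreviation "K p u q \<equiv> Deq D `` {Cl (p,u,q)}"

lemma K_eq: "walk D p u q \<Longrightarrow> walk D p' w q' \<Longrightarrow> K p u q = K p' w q' \<longleftrightarrow> p' = p \<and> q' = q \<and> JE p u q w"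
  by (simp add: eq_equiv_class_iff[OF Deq_equiv cls_in cls_in] Deq_cls)

lemma in_K: "X \<in> K p u q \<Longrightarrow> walk D p u q \<Longrightarrow> \<exists>w. walk D p w q \<and> X = Cl (p,w,q) \<and> JE p u q w"
proof -
  assume a: "X \<in> K p u q" "walk D p u q"
  then have d: "(Cl (p,u,q), X) \<in> Deq D" by simp
  then obtain p' w q' where Y: "walk D p' w q'" "X = Cl (p',w,q')" using arr_cls Deq_arr by blast
  then show ?thesis using d a Deq_cls by auto
qed

lemma self_K: "walk D p u q \<Longrightarrow> Cl (p,u,q) \<in> K p u q"
  using Deq_cls JE_refl by simp

lemma some_K: "walk D p u q \<Longrightarrow> \<exists>w. (SOME X. X \<in> K p u q) = Cl (p,w,q) \<and> walk D p w q \<and> JE p u q w"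
proof -
  assume w: "walk D p u q"
  have "(SOME X. X \<in> K p u q) \<in> K p u q" by (rule someI) (rule self_K[OF w])
  then show ?thesis using in_K w by blast
qed

lemma Dg_src: "walk D p u q \<Longrightarrow> g_src (Dg D) (K p u q) = p"
  using some_K FP_src by (fastforce simp: Dg_def)
lemma Dg_tgt: "walk D p u q \<Longrightarrow> g_tgt (Dg D) (K p u q) = q"
  using some_K FP_tgt by (fastforce simp: Dg_def)

lemma Dg_comp: assumes "walk D p u r" "walk D r w q"
  shows "g_comp (Dg D) (K p u r) (K r w q) = K p (u @ w) q"
proof -
  obtain u' where u': "(SOME X. X \<in> K p u r) = Cl (p,u',r)" "walk D p u' r" "JE p u r u'" using some_K[OF assms(1)] by blast
  obtain w' where w': "(SOME X. X \<in> K r w q) = Cl (r,w',q)" "walk D r w' q" "JE r w q w'" using some_K[OF assms(2)] by blast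
  have "g_comp (Dg D) (K p u r) (K r w q) = K p (u' @ w') q"
    using u' w' FP_comp by (simp add: Dg_def)
  also have "\<dots> = K p (u @ w) q"
  proof -
    have wa: "walk D p (u' @ w') q" "walk D p (u @ w) q" using u' w' assms walk_append by blast+
    show ?thesis using K_eq[OF wa] JE_sym[OF JE_app[OF u'(3) w'(3)]] by simp
  qed
  finally show ?thesis .
qed

lemma Dg_arr: "g_arr (Dg D) = g_arr (FP D) // Deq D" by (simp add: Dg_def)

lemma K_in: "walk D p u q \<Longrightarrow> K p u q \<in> g_arr (Dg D)"
  unfolding Dg_arr by (intro quotientI cls_in)

lemma arr_K: "Z \<in> g_arr (Dg D) \<Longrightarrow> \<exists>p u q. walk D p u q \<and> Z = K p u q"
  unfolding Dg_arr
proof (erule quotientE)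
  fix X assume "X \<in> g_arr (FP D)" "Z = Deq D `` {X}"
  then show ?thesis using arr_cls[of X] by blast
qed

lemma phi0_eq: "(v,h) \<in> VxH D \<Longrightarrow> phi0 D (v,h) = K (vt D v) [Inl v, Inr h] (hr D h)"
  unfolding phi0_def jD_def iD_def VxH_def
  using Dg_comp[of "vt D v" "[Inl v]" "vb D v" "[Inr h]" "hr D h"] by (auto dest: walk_obj)

lemma VxH_walk: "(v,h) \<in> VxH D \<Longrightarrow> walk D (vt D v) [Inl v, Inr h] (hr D h)"
  unfolding VxH_def by auto

lemma simB_iff: "((v1,h1),(v2,h2)) \<in> simB D \<longleftrightarrow> (v1,h1) \<in> VxH D \<and> (v2,h2) \<in> VxH D \<and>
   vt D v2 = vt D v1 \<and> hr D h2 = hr D h1 \<and> JE (vt D v1) [Inl v1, Inr h1] (hr D h1) [Inl v2, Inr h2]"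
  unfolding simB_def JE_def Jw_def using VxH_walk by (auto simp: VxH_def)

lemma simB_K: "((v1,h1),(v2,h2)) \<in> simB D \<longleftrightarrow> (v1,h1) \<in> VxH D \<and> (v2,h2) \<in> VxH D \<and>
   K (vt D v1) [Inl v1, Inr h1] (hr D h1) = K (vt D v2) [Inl v2, Inr h2] (hr D h2)"
proof -
  have "(v1,h1) \<in> VxH D \<Longrightarrow> (v2,h2) \<in> VxH D \<Longrightarrow>
     K (vt D v1) [Inl v1, Inr h1] (hr D h1) = K (vt D v2) [Inl v2, Inr h2] (hr D h2) \<longleftrightarrow>
     vt D v2 = vt D v1 \<and> hr D h2 = hr D h1 \<and> JE (vt D v1) [Inl v1, Inr h1] (hr D h1) [Inl v2, Inr h2]"
    by (rule K_eq[OF VxH_walk VxH_walk])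
  then show ?thesis unfolding simB_iff by blast
qed


lemma surj_vh: "walk D p u q \<Longrightarrow> \<exists>v h. (v,h) \<in> VxH D \<and> vt D v = p \<and> hr D h = q \<and> JE p u q [Inl v, Inr h]"
proof (induction u arbitrary: p)
  case Nil
  then have p: "p = q" "p \<in> dg_obj D" by auto
  let ?v = "g_id (dg_V D) p" and ?h = "g_id (dg_H D) p"
  have vh: "(?v, ?h) \<in> VxH D" using p by (simp add: VxH_def)
  have s1: "weq p ([] @ Inl ?v # [Inr ?h]) ([] @ [Inr ?h]) p"
    by (rule weq_step[OF fp_step.idV[OF p(2)]]) (use p in simp)
  have s2: "weq p ([] @ Inr ?h # []) ([] @ []) p"
    by (rule weq_step[OF fp_step.idH[OF p(2)]]) (use p in simp)
  have "JE p [] p [Inl ?v, Inr ?h]" using JE_sym[OF JE_weq[OF weq_trans[OF s1[simplified] s2[simplified]]]] by simp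
  moreover have "vt D ?v = p" "hr D ?h = p" using p by auto
  ultimately show ?case using vh p by blast
next
  case (Cons a u)
  then have a: "lok D a" "lsrc D a = p" "walk D (ltgt D a) u q" by auto
  obtain v h where vh: "(v,h) \<in> VxH D" "vt D v = ltgt D a" "hr D h = q" "JE (ltgt D a) u q [Inl v, Inr h]"
    using Cons.IH[OF a(3)] by blast
  have vh': "v \<in> g_arr (dg_V D)" "h \<in> g_arr (dg_H D)" "vb D v = hl D h" using vh(1) by (auto simp: VxH_def)
  have qo: "q \<in> dg_obj D" "p \<in> dg_obj D" using walk_obj[OF a(3)] a by auto
  have ra: "JE p [a] (ltgt D a) [a]" by (rule JE_refl) (use a in \<open>auto dest: walk_obj\<close>)
  have J0: "JE p (a # u) q [a, Inl v, Inr h]" using JE_app[OF ra vh(4)] by simp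
  show ?case
  proof (cases a)
    case (Inl f)
    have s: "weq p ([] @ Inl f # Inl v # [Inr h]) ([] @ Inl (g_comp (dg_V D) f v) # [Inr h]) q"
      by (rule weq_step[OF fp_step.mergeV]) (use Inl a vh vh' qo in simp_all)
    have "JE p (a # u) q [Inl (g_comp (dg_V D) f v), Inr h]"
      using JE_trans[OF J0[unfolded Inl] JE_weq[OF s[simplified]]] Inl by simp
    moreover have "(g_comp (dg_V D) f v, h) \<in> VxH D" using Inl a vh vh' by (simp add: VxH_def)
    moreover have "vt D (g_comp (dg_V D) f v) = p" using Inl a vh vh' by simp
    ultimately show ?thesis using vh by blast
  next
    case (Inr k)
    have k: "k \<in> g_arr (dg_H D)" "hl D k = p" "hr D k = vt D v" using Inr a vh by auto
    obtain A where A: "A \<in> boxes D" "btop D A = k" "brgt D A = v" using fill_tr[of k v] k vh' by auto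
    let ?f = "blft D A" and ?y = "bbot D A"
    have ar: "?f \<in> g_arr (dg_V D)" "?y \<in> g_arr (dg_H D)" using A by auto
    have co: "vt D ?f = p" "vb D ?f = hl D ?y" "hr D ?y = vb D v"
      using A k corner_tl corner_bl corner_br by metis+
    have J: "Jw p ([Inr k, Inl v] @ [Inr (g_inv (dg_H D) ?y), Inl (g_inv (dg_V D) ?f)])"
      using J_box[OF A(1)] A k by (simp add: bw_def)
    have s1: "weq p ([Inr k, Inl v] @ Inr h # linv D (Inr h) # [Inr (g_inv (dg_H D) ?y), Inl (g_inv (dg_V D) ?f)])
       ([Inr k, Inl v] @ [Inr (g_inv (dg_H D) ?y), Inl (g_inv (dg_V D) ?f)]) p"
      by (rule weq_cancel) (use k vh vh' ar co qo in simp)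
    have J2: "Jw p ([Inr k, Inl v, Inr h] @ rv [Inl ?f, Inr ?y, Inr h])"
      using J_weq[OF J weq_sym[OF s1]] k by simp
    have JE1: "JE p [Inr k, Inl v, Inr h] q [Inl ?f, Inr ?y, Inr h]"
      unfolding JE_def using J2 k vh vh' ar co qo by simp
    have s2: "weq p ([Inl ?f] @ Inr ?y # Inr h # []) ([Inl ?f] @ Inr (g_comp (dg_H D) ?y h) # []) q"
      by (rule weq_step[OF fp_step.mergeH]) (use k vh vh' ar co qo in simp_all)
    have "JE p (a # u) q [Inl ?f, Inr (g_comp (dg_H D) ?y h)]"
      using JE_trans[OF JE_trans[OF J0[unfolded Inr] JE1] JE_weq[OF s2[simplified]]] by (simp add: Inr)
    moreover have "(?f, g_comp (dg_H D) ?y h) \<in> VxH D" using vh vh' ar co by (simp add: VxH_def)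
    moreover have "hr D (g_comp (dg_H D) ?y h) = q" using vh vh' ar co by simp
    ultimately show ?thesis using co by blast
  qed
qed

lemma main:
  shows "equiv (VxH D) (simB D) \<and>
         phi0 D respects simB D \<and>
         bij_betw (phi D) (VxH D // simB D) (g_arr (Dg D)) \<and>
         (\<forall>(v, h) \<in> VxH D.
           g_src (Dg D) (phi D (simB D `` {(v, h)})) = vt D v \<and>
           g_tgt (Dg D) (phi D (simB D `` {(v, h)})) = hr D h)"
proof -
  have sK: "(x, y) \<in> simB D \<longleftrightarrow> x \<in> VxH D \<and> y \<in> VxH D \<and> phi0 D x = phi0 D y" for x y
    using simB_K[of "fst x" "snd x" "fst y" "snd y"] phi0_eq[of "fst x" "snd x"] phi0_eq[of "fst y" "snd y"]
    by auto
  have eq: "equiv (VxH D) (simB D)"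
  proof (rule equivI)
    show "simB D \<subseteq> VxH D \<times> VxH D" using sK by auto
    show "refl_on (VxH D) (simB D)" by (rule refl_onI) (use sK in auto)
    show "sym (simB D)" by (rule symI) (use sK in auto)
    show "trans (simB D)" by (rule transI) (use sK in auto)
  qed
  have resp: "phi0 D respects simB D" unfolding congruent_def using sK by auto
  have phic: "phi D (simB D `` {x}) = phi0 D x" if x: "x \<in> VxH D" for x
    unfolding phi_def
  proof (rule the_elem_image_unique)
    have "(x, x) \<in> simB D" using x sK by auto
    then show "simB D `` {x} \<noteq> {}" by auto
    show "\<And>y. y \<in> simB D `` {x} \<Longrightarrow> phi0 D y = phi0 D x" using sK by auto
  qed
  have inj: "inj_on (phi D) (VxH D // simB D)"
  proof (rule inj_onI)
    fix c1 c2 assume c: "c1 \<in> VxH D // simB D" "c2 \<in> VxH D // simB D" "phi D c1 = phi D c2"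
    obtain x1 where x1: "x1 \<in> VxH D" "c1 = simB D `` {x1}" using c(1) by (auto elim: quotientE)
    obtain x2 where x2: "x2 \<in> VxH D" "c2 = simB D `` {x2}" using c(2) by (auto elim: quotientE)
    have "(x1, x2) \<in> simB D" using c(3) x1 x2 phic sK by auto
    then show "c1 = c2" using x1 x2 equiv_class_eq[OF eq] by simp
  qed
  have img: "phi D ` (VxH D // simB D) = g_arr (Dg D)"
  proof
    show "phi D ` (VxH D // simB D) \<subseteq> g_arr (Dg D)"
    proof
      fix z assume "z \<in> phi D ` (VxH D // simB D)"
      then obtain x where x: "x \<in> VxH D" "z = phi D (simB D `` {x})" by (auto elim: quotientE)
      then show "z \<in> g_arr (Dg D)" using phic phi0_eq K_in VxH_walk by (cases x) auto
    qed
    show "g_arr (Dg D) \<subseteq> phi D ` (VxH D // simB D)"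
    proof
      fix Z assume "Z \<in> g_arr (Dg D)"
      then obtain p u q where Z: "walk D p u q" "Z = K p u q" using arr_K by blast
      obtain v h where vh: "(v,h) \<in> VxH D" "vt D v = p" "hr D h = q" "JE p u q [Inl v, Inr h]"
        using surj_vh[OF Z(1)] by blast
      have "Z = phi0 D (v,h)" using Z vh phi0_eq K_eq[OF Z(1) VxH_walk[OF vh(1)]] by simp
      then have "Z = phi D (simB D `` {(v,h)})" using phic vh by simp
      moreover have "simB D `` {(v,h)} \<in> VxH D // simB D" using vh by (intro quotientI)
      ultimately show "Z \<in> phi D ` (VxH D // simB D)" by blast
    qed
  qed
  have st: "\<forall>(v, h) \<in> VxH D.
           g_src (Dg D) (phi D (simB D `` {(v, h)})) = vt D v \<and>
           g_tgt (Dg D) (phi D (simB D `` {(v, h)})) = hr D h"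
    using phic phi0_eq Dg_src Dg_tgt VxH_walk by auto
  show ?thesis using eq resp inj img st by (simp add: bij_betw_def)
qed

end


theorem proposition3p1:
  fixes D :: "('p,'v,'h,'b) dgrpd"
  assumes "double_groupoid D" and "slim D" and "filling D"
  shows "equiv (VxH D) (simB D) \<and>
         phi0 D respects simB D \<and>
         bij_betw (phi D) (VxH D // simB D) (g_arr (Dg D)) \<and>
         (\<forall>(v, h) \<in> VxH D.
           g_src (Dg D) (phi D (simB D `` {(v, h)})) = vt D v \<and>
           g_tgt (Dg D) (phi D (simB D `` {(v, h)})) = hr D h)"
proof -
  interpret DG D using assms(1,3) by unfold_locales
  show ?thesis by (rule main)
qed

end
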